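(* In the category of cartesian cubical sets, $\mathrm{I}^{\mathrm{I}}\cong \mathrm{I}+1$.
   Context: Let $\mathbb{B}$ be the category of finite sets $[n]=\{\bot,x_1,\dots,x_n,\top\}$ ($n\ge0$, $\bot\ne\top$) and functions preserving $\bot,\top$; the cartesian cube category is $\mathbb{C}_\times=\mathbb{B}^{op}$, and cartesian cubical sets are presheaves on $\mathbb{C}_\times$. $\mathrm{I}$ is the representable presheaf on $[1]$ (the $1$-cube), $1$ is the terminal presheaf, $\mathrm{I}^{\mathrm{I}}$ is the exponential and $+$ the coproduct. *)

theory Defs
  imports "HOL-Library.FuncSet"
begin

text \<open>The category B: object [n] is represented by the set {0..n+1}, where
  0 plays the role of bot, n+1 the role of top, and 1..n the variables x_1..x_n.\<close>

definition bset :: "nat \<Rightarrow> nat set" where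
  "bset n = {..Suc n}"

definition bhom :: "nat \<Rightarrow> nat \<Rightarrow> (nat \<Rightarrow> nat) set" where
  "bhom n m = {f. f \<in> bset n \<rightarrow>\<^sub>E bset m \<and> f 0 = 0 \<and> f (Suc n) = Suc m}"

definition bid :: "nat \<Rightarrow> (nat \<Rightarrow> nat)" where
  "bid n = restrict id (bset n)"

definition bcomp :: "nat \<Rightarrow> (nat \<Rightarrow> nat) \<Rightarrow> (nat \<Rightarrow> nat) \<Rightarrow> (nat \<Rightarrow> nat)" where
  "bcomp n g f = restrict (g \<circ> f) (bset n)"

text \<open>Cartesian cubical sets = presheaves on B^op = covariant functors B -> Set.
  A B-morphism f : [n] -> [m] acts as  ar X n m f : ob X n -> ob X m.\<close>

record 'a cset =
  ob :: "nat \<Rightarrow> 'a set"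
  ar :: "nat \<Rightarrow> nat \<Rightarrow> (nat \<Rightarrow> nat) \<Rightarrow> 'a \<Rightarrow> 'a"

definition is_cset :: "('a, 'z) cset_scheme \<Rightarrow> bool" where
  "is_cset X \<longleftrightarrow>
     (\<forall>n m f x. f \<in> bhom n m \<longrightarrow> x \<in> ob X n \<longrightarrow> ar X n m f x \<in> ob X m) \<and>
     (\<forall>n x. x \<in> ob X n \<longrightarrow> ar X n n (bid n) x = x) \<and>
     (\<forall>n m k f g x. f \<in> bhom n m \<longrightarrow> g \<in> bhom m k \<longrightarrow> x \<in> ob X n \<longrightarrow>
        ar X n k (bcomp n g f) x = ar X m k g (ar X n m f x))"

text \<open>Representable presheaf on [c]:  y c ([k]) = Hom_C([k],[c]) = Hom_B([c],[k]).\<close>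
definition yB :: "nat \<Rightarrow> (nat \<Rightarrow> nat) cset" where
  "yB c = \<lparr> ob = (\<lambda>k. bhom c k), ar = (\<lambda>k l g f. bcomp c g f) \<rparr>"

definition cI :: "(nat \<Rightarrow> nat) cset" where
  "cI = yB 1"

definition cterm :: "unit cset" where
  "cterm = \<lparr> ob = (\<lambda>_. {()}), ar = (\<lambda>_ _ _ _. ()) \<rparr>"

definition ccoprod :: "'a cset \<Rightarrow> 'b cset \<Rightarrow> ('a + 'b) cset" where
  "ccoprod X Y = \<lparr> ob = (\<lambda>n. Inl ` ob X n \<union> Inr ` ob Y n),
     ar = (\<lambda>n m f. case_sum (\<lambda>x. Inl (ar X n m f x)) (\<lambda>y. Inr (ar Y n m f y))) \<rparr>"

definition cprod :: "'a cset \<Rightarrow> 'b cset \<Rightarrow> ('a \<times> 'b) cset" where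
  "cprod X Y = \<lparr> ob = (\<lambda>n. ob X n \<times> ob Y n),
     ar = (\<lambda>n m f (x, y). (ar X n m f x, ar Y n m f y)) \<rparr>"

definition ntrans :: "'a cset \<Rightarrow> 'b cset \<Rightarrow> (nat \<Rightarrow> 'a \<Rightarrow> 'b) set" where
  "ntrans X Y = {\<theta>. (\<forall>k. \<theta> k \<in> ob X k \<rightarrow>\<^sub>E ob Y k) \<and>
     (\<forall>k l g x. g \<in> bhom k l \<longrightarrow> x \<in> ob X k \<longrightarrow>
        \<theta> l (ar X k l g x) = ar Y k l g (\<theta> k x))}"

text \<open>Exponential: (Q^P)([n]) = Nat(y [n] x P, Q), with the action along
  h : [n] -> [m] in B given by precomposition with y(h).\<close>
definition cexp :: "'a cset \<Rightarrow> 'b cset \<Rightarrow> (nat \<Rightarrow> ((nat \<Rightarrow> nat) \<times> 'a) \<Rightarrow> 'b) cset" where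
  "cexp P Q = \<lparr> ob = (\<lambda>n. ntrans (cprod (yB n) P) Q),
     ar = (\<lambda>n m h \<theta>. (\<lambda>k. restrict (\<lambda>(f, p). \<theta> k (bcomp n f h, p)) (bhom m k \<times> ob P k))) \<rparr>"

definition cset_iso :: "'a cset \<Rightarrow> 'b cset \<Rightarrow> bool" where
  "cset_iso X Y \<longleftrightarrow> (\<exists>\<phi>. (\<forall>n. bij_betw (\<phi> n) (ob X n) (ob Y n)) \<and>
     (\<forall>n m f x. f \<in> bhom n m \<longrightarrow> x \<in> ob X n \<longrightarrow> \<phi> m (ar X n m f x) = ar Y n m f (\<phi> n x)))"

end

theory Submission
  imports Defs
begin

lemma bset_mem[simp]: "x \<in> bset n \<longleftrightarrow> x \<le> Suc n" by (simp add: bset_def)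

lemma bhom_iff: "f \<in> bhom n m \<longleftrightarrow> (\<forall>x. x \<le> Suc n \<longrightarrow> f x \<le> Suc m) \<and>
   (\<forall>x. \<not> x \<le> Suc n \<longrightarrow> f x = undefined) \<and> f 0 = 0 \<and> f (Suc n) = Suc m"
  unfolding bhom_def PiE_def Pi_def extensional_def by auto

lemma bcomp_bhom: "f \<in> bhom n m \<Longrightarrow> g \<in> bhom m k \<Longrightarrow> bcomp n g f \<in> bhom n k"
  by (auto simp: bhom_iff bcomp_def)

lemma bcomp_assoc: "g \<in> bhom a n \<Longrightarrow> bcomp a (bcomp n h f) g = bcomp a h (bcomp a f g)"
  by (auto simp: bcomp_def bhom_iff fun_eq_iff)

lemma bcomp_bid: "g \<in> bhom a n \<Longrightarrow> bcomp a (bid n) g = g"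
  by (auto simp: bcomp_def bid_def bhom_iff fun_eq_iff)

lemma ob_exp: "ob (cexp cI cI) n = ntrans (cprod (yB n) cI) cI"
  by (simp add: cexp_def)
lemma ob_prod: "ob (cprod (yB n) cI) k = bhom n k \<times> bhom 1 k"
  by (simp add: cprod_def yB_def cI_def)
lemma ar_prod: "ar (cprod (yB n) cI) k l g (f, p) = (bcomp n g f, bcomp 1 g p)"
  by (simp add: cprod_def yB_def cI_def)
lemma ob_I: "ob cI k = bhom 1 k" by (simp add: yB_def cI_def)
lemma ar_I: "ar cI k l g x = bcomp 1 g x" by (simp add: yB_def cI_def)

lemma ntrans_iff: "\<theta> \<in> ntrans (cprod (yB n) cI) cI \<longleftrightarrow>
  (\<forall>k. \<theta> k \<in> (bhom n k \<times> bhom 1 k) \<rightarrow>\<^sub>E bhom 1 k) \<and>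
  (\<forall>k l g f p. g \<in> bhom k l \<longrightarrow> f \<in> bhom n k \<longrightarrow> p \<in> bhom 1 k \<longrightarrow>
     \<theta> l (bcomp n g f, bcomp 1 g p) = bcomp 1 g (\<theta> k (f, p)))"
  unfolding ntrans_def ob_prod ob_I ar_I by (auto simp: ar_prod)

definition T1 :: "(nat \<Rightarrow> nat) \<Rightarrow> nat \<Rightarrow> nat \<Rightarrow> ((nat \<Rightarrow> nat) \<times> (nat \<Rightarrow> nat)) \<Rightarrow> (nat \<Rightarrow> nat)" where
  "T1 g n = (\<lambda>k. restrict (\<lambda>(f,p). bcomp 1 f g) (bhom n k \<times> bhom 1 k))"
definition T2 :: "nat \<Rightarrow> nat \<Rightarrow> ((nat \<Rightarrow> nat) \<times> (nat \<Rightarrow> nat)) \<Rightarrow> (nat \<Rightarrow> nat)" where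
  "T2 n = (\<lambda>k. restrict snd (bhom n k \<times> bhom 1 k))"
definition psi where "psi n = case_sum (\<lambda>g. T1 g n) (\<lambda>_. T2 n)"

lemma T1_in: "g \<in> bhom 1 n \<Longrightarrow> T1 g n \<in> ntrans (cprod (yB n) cI) cI"
  unfolding ntrans_iff T1_def
  by (auto simp: bcomp_bhom bcomp_assoc)

lemma T2_in: "T2 n \<in> ntrans (cprod (yB n) cI) cI"
  unfolding ntrans_iff T2_def
  by (auto simp: bcomp_bhom)

lemma ob_Y: "ob (ccoprod cI cterm) n = Inl ` bhom 1 n \<union> Inr ` {()}"
  by (simp add: ccoprod_def cterm_def ob_I)
lemma ar_Y: "ar (ccoprod cI cterm) n m f y = (case y of Inl g \<Rightarrow> Inl (bcomp 1 f g) | Inr u \<Rightarrow> Inr ())"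
  by (simp add: ccoprod_def cterm_def ar_I split: sum.split)

definition iota where "iota n = restrict (\<lambda>x. if x \<le> n then x else Suc (Suc n)) (bset n)"
definition jj where "jj n = restrict (\<lambda>x. if x = 0 then 0 else if x = 1 then Suc n else Suc (Suc n)) (bset 1)"
definition cop where "cop n f p = restrict (\<lambda>x. if x \<le> n then f x else if x = Suc n then p 1 else f (Suc n)) (bset (Suc n))"

lemma iota_in: "iota n \<in> bhom n (Suc n)" by (auto simp: iota_def bhom_iff)
lemma jj_in: "jj n \<in> bhom 1 (Suc n)" by (auto simp: jj_def bhom_iff)
lemma cop_in: "f \<in> bhom n k \<Longrightarrow> p \<in> bhom 1 k \<Longrightarrow> cop n f p \<in> bhom (Suc n) k"
  by (auto simp: cop_def bhom_iff)
lemma cop_iota: "f \<in> bhom n k \<Longrightarrow> p \<in> bhom 1 k \<Longrightarrow> bcomp n (cop n f p) (iota n) = f"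
  by (auto simp: cop_def iota_def bcomp_def bhom_iff fun_eq_iff le_Suc_eq)
lemma le2: "(x::nat) \<le> Suc (Suc 0) \<longleftrightarrow> x = 0 \<or> x = 1 \<or> x = 2" by auto

lemma cop_jj: "f \<in> bhom n k \<Longrightarrow> p \<in> bhom 1 k \<Longrightarrow> bcomp 1 (cop n f p) (jj n) = p"
  unfolding fun_eq_iff
proof
  fix x assume f: "f \<in> bhom n k" and p: "p \<in> bhom 1 k"
  show "bcomp 1 (cop n f p) (jj n) x = p x"
  proof (cases "x \<le> 2")
    case True then have "x = 0 \<or> x = 1 \<or> x = 2" by auto
    then show ?thesis using f p by (auto simp: cop_def jj_def bcomp_def bhom_iff numeral_2_eq_2)
  next
    case False then show ?thesis using p by (auto simp: bcomp_def bhom_iff numeral_2_eq_2)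
  qed
qed


lemma yon:
  assumes th: "\<theta> \<in> ntrans (cprod (yB n) cI) cI" and f: "f \<in> bhom n k" and p: "p \<in> bhom 1 k"
  shows "\<theta> k (f,p) = bcomp 1 (cop n f p) (\<theta> (Suc n) (iota n, jj n))"
proof -
  have "\<theta> k (bcomp n (cop n f p) (iota n), bcomp 1 (cop n f p) (jj n))
     = bcomp 1 (cop n f p) (\<theta> (Suc n) (iota n, jj n))"
    using th unfolding ntrans_iff using cop_in[OF f p] iota_in jj_in by blast
  then show ?thesis using cop_iota[OF f p] cop_jj[OF f p] by simp
qed

lemma t_in: "\<theta> \<in> ntrans (cprod (yB n) cI) cI \<Longrightarrow> \<theta> (Suc n) (iota n, jj n) \<in> bhom 1 (Suc n)"
  unfolding ntrans_iff using iota_in jj_in by (auto simp: PiE_def Pi_def)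

lemma case_r:
  assumes t: "t \<in> bhom 1 (Suc n)" "t 1 = Suc n" and f: "f \<in> bhom n k" and p: "p \<in> bhom 1 k"
  shows "bcomp 1 (cop n f p) t = p"
  unfolding fun_eq_iff
proof
  fix x
  show "bcomp 1 (cop n f p) t x = p x"
  proof (cases "x \<le> 2")
    case True then have "x = 0 \<or> x = 1 \<or> x = 2" by auto
    then show ?thesis using t f p by (auto simp: cop_def bcomp_def bhom_iff numeral_2_eq_2)
  next
    case False then show ?thesis using p by (auto simp: bcomp_def bhom_iff numeral_2_eq_2)
  qed
qed

definition gof where "gof n t = restrict (\<lambda>x. if x = 0 then 0 else if x = 1 then (if t 1 = Suc (Suc n) then Suc n else t 1) else Suc n) (bset 1)"

lemma gof_in: "t \<in> bhom 1 (Suc n) \<Longrightarrow> t 1 \<noteq> Suc n \<Longrightarrow> gof n t \<in> bhom 1 n"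
  unfolding bhom_iff gof_def by (auto simp: numeral_2_eq_2)

lemma case_l:
  assumes t: "t \<in> bhom 1 (Suc n)" "t 1 \<noteq> Suc n" and f: "f \<in> bhom n k" and p: "p \<in> bhom 1 k"
  shows "bcomp 1 (cop n f p) t = bcomp 1 f (gof n t)"
  unfolding fun_eq_iff
proof
  fix x
  show "bcomp 1 (cop n f p) t x = bcomp 1 f (gof n t) x"
  proof (cases "x \<le> 2")
    case True then have "x = 0 \<or> x = 1 \<or> x = 2" by auto
    moreover have "t 1 \<le> n \<or> t 1 = Suc (Suc n)" using t unfolding bhom_iff
      by (metis One_nat_def le_SucE le_Suc_eq one_le_numeral numeral_2_eq_2)
    ultimately show ?thesis using t f p by (auto simp: cop_def gof_def bcomp_def bhom_iff numeral_2_eq_2)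
  next
    case False then show ?thesis by (auto simp: bcomp_def gof_def numeral_2_eq_2)
  qed
qed

lemma ext_eq:
  assumes "\<theta> \<in> ntrans (cprod (yB n) cI) cI" "\<eta> \<in> ntrans (cprod (yB n) cI) cI"
    "\<And>k f p. f \<in> bhom n k \<Longrightarrow> p \<in> bhom 1 k \<Longrightarrow> \<theta> k (f,p) = \<eta> k (f,p)"
  shows "\<theta> = \<eta>"
proof (rule ext)
  fix k
  have a: "\<theta> k \<in> extensional (bhom n k \<times> bhom 1 k)" "\<eta> k \<in> extensional (bhom n k \<times> bhom 1 k)"
    using assms(1,2) unfolding ntrans_iff PiE_def by auto
  show "\<theta> k = \<eta> k"
    by (rule extensionalityI[OF a]) (use assms(3) in auto)
qed

lemma psi_surj:
  assumes th: "\<theta> \<in> ntrans (cprod (yB n) cI) cI"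
  shows "\<theta> \<in> psi n ` ob (ccoprod cI cterm) n"
proof -
  define t where "t = \<theta> (Suc n) (iota n, jj n)"
  have t: "t \<in> bhom 1 (Suc n)" using t_in[OF th] t_def by simp
  show ?thesis
  proof (cases "t 1 = Suc n")
    case True
    have "\<theta> = T2 n"
      by (rule ext_eq[OF th T2_in]) (use case_r[OF t True] in \<open>simp add: T2_def yon[OF th] t_def[symmetric]\<close>)
    then show ?thesis by (intro image_eqI[where x="Inr ()"]) (auto simp: ob_Y psi_def)
  next
    case False
    have "\<theta> = T1 (gof n t) n"
      by (rule ext_eq[OF th T1_in[OF gof_in[OF t False]]])
        (use case_l[OF t False] in \<open>simp add: T1_def yon[OF th] t_def[symmetric]\<close>)
    then show ?thesis using gof_in[OF t False]
      by (intro image_eqI[where x="Inl (gof n t)"]) (auto simp: ob_Y psi_def)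
  qed
qed

lemma bid_in: "bid n \<in> bhom n n" by (auto simp: bid_def bhom_iff)

lemma psi_inj: "inj_on (psi n) (ob (ccoprod cI cterm) n)"
proof
  fix x y assume x: "x \<in> ob (ccoprod cI cterm) n" and y: "y \<in> ob (ccoprod cI cterm) n"
    and e: "psi n x = psi n y"
  have L: "T1 g n \<noteq> T2 n" if g: "g \<in> bhom 1 n" for g
  proof
    assume "T1 g n = T2 n"
    then have "T1 g n (Suc n) (iota n, jj n) 1 = T2 n (Suc n) (iota n, jj n) 1" by simp
    moreover have "g 1 \<le> Suc n" using g by (simp add: bhom_iff)
    ultimately show False using iota_in jj_in
      by (auto simp: T1_def T2_def bcomp_def iota_def jj_def split: if_splits)
  qed
  have LL: "g1 = g2" if "g1 \<in> bhom 1 n" "g2 \<in> bhom 1 n" "T1 g1 n = T1 g2 n" for g1 g2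
  proof -
    have "T1 g1 n n (bid n, g1) = T1 g2 n n (bid n, g1)" using that by simp
    then show ?thesis using that bid_in by (simp add: T1_def bcomp_bid)
  qed
  have L2: "T2 n \<noteq> T1 g n" if "g \<in> bhom 1 n" for g using L[OF that] by metis
  show "x = y" using x y e L L2 LL by (auto simp: ob_Y psi_def)
qed

lemma psi_nat:
  assumes h: "h \<in> bhom n m" and y: "y \<in> ob (ccoprod cI cterm) n"
  shows "psi m (ar (ccoprod cI cterm) n m h y) = ar (cexp cI cI) n m h (psi n y)"
proof -
  have A: "ar (cexp cI cI) n m h \<theta> = (\<lambda>k. restrict (\<lambda>(f, p). \<theta> k (bcomp n f h, p)) (bhom m k \<times> bhom 1 k))"
    for \<theta> by (simp add: cexp_def ob_I)
  show ?thesis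
    using y h
    by (auto simp: ob_Y ar_Y psi_def A T1_def T2_def fun_eq_iff bcomp_bhom bcomp_assoc)
qed

lemma psi_in: "y \<in> ob (ccoprod cI cterm) n \<Longrightarrow> psi n y \<in> ob (cexp cI cI) n"
  by (auto simp: ob_Y psi_def ob_exp T1_in T2_in)

lemma Y_closed: "h \<in> bhom n m \<Longrightarrow> y \<in> ob (ccoprod cI cterm) n \<Longrightarrow> ar (ccoprod cI cterm) n m h y \<in> ob (ccoprod cI cterm) m"
  by (auto simp: ob_Y ar_Y bcomp_bhom)

lemma psi_bij: "bij_betw (psi n) (ob (ccoprod cI cterm) n) (ob (cexp cI cI) n)"
  unfolding bij_betw_def using psi_inj psi_in psi_surj by (auto simp: ob_exp)

theorem lemma2p5:
  shows "cset_iso (cexp cI cI) (ccoprod cI cterm)"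
  unfolding cset_iso_def
proof (intro exI conjI allI impI)
  let ?phi = "\<lambda>n. the_inv_into (ob (ccoprod cI cterm) n) (psi n)"
  fix n show "bij_betw (?phi n) (ob (cexp cI cI) n) (ob (ccoprod cI cterm) n)"
    by (rule bij_betw_the_inv_into[OF psi_bij])
next
  let ?phi = "\<lambda>n. the_inv_into (ob (ccoprod cI cterm) n) (psi n)"
  fix n m f x assume f: "f \<in> bhom n m" and x: "x \<in> ob (cexp cI cI) n"
  obtain y where y: "y \<in> ob (ccoprod cI cterm) n" and xy: "x = psi n y"
    using x psi_bij unfolding bij_betw_def by auto
  have 1: "?phi n x = y" using xy y psi_inj the_inv_into_f_f by metis
  have "?phi m (ar (cexp cI cI) n m f x) = ?phi m (psi m (ar (ccoprod cI cterm) n m f y))"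
    using psi_nat[OF f y] xy by simp
  also have "\<dots> = ar (ccoprod cI cterm) n m f y"
    using the_inv_into_f_f[OF psi_inj Y_closed[OF f y]] .
  finally show "?phi m (ar (cexp cI cI) n m f x) = ar (ccoprod cI cterm) n m f (?phi n x)"
    using 1 by simp
qed

end
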